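(* Let $p>2$ be a prime and let $a,b\in\mathbb{C}_p$ with $a\neq0$, $b\neq0$, $a\neq b$, $|2a|_p=|b|_p$ and $|2a-b|_p=|a|_p$. Let $P=-\frac1b$, $D=\mathbb{C}_p\setminus\{P\}$, $f(x)=\frac{ax^2}{bx+1}$ on $D$, $x_1=0$, $x_2=\frac1{a-b}$. Then $x_1$ is an attracting fixed point and $x_2$ is an indifferent fixed point of $f$, and $$A(x_1)=B_{\frac{1}{|a|_p}}(x_1),\qquad SI(x_2)=B_{\frac1{|a-b|_p}}(x_2).$$
   Context: $\mathbb{C}_p$ is the field of complex $p$-adic numbers with $p$-adic norm $|\cdot|_p$. For $c\in\mathbb{C}_p$, $r>0$: $B_r(c)=\{x:|x-c|_p<r\}$, $S_r(c)=\{x:|x-c|_p=r\}$. For $y\in D$, $y^{(n)}=f^n(y)$ is the $n$-th iterate (defined as long as no earlier iterate equals $P$). A fixed point $x^{(0)}$ of $f$ is attracting if $|f'(x^{(0)})|_p<1$ and indifferent if $|f'(x^{(0)})|_p=1$. Its basin of attraction is $A(x^{(0)})=\{y: y^{(n)}\text{ defined for all }n,\ y^{(n)}\to x^{(0)}\}$. A ball $B_r(x^{(0)})$ contained in $D$ is a Siegel disk of $x^{(0)}$ if every sphere $S_\rho(x^{(0)})$ with $\rho<r$ is invariant, i.e. $x\in S_\rho(x^{(0)})$ implies $x^{(n)}\in S_\rho(x^{(0)})$ for all $n\ge1$; the maximal Siegel disk $SI(x^{(0)})$ is the union of all Siegel disks centered at $x^{(0)}$. *)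

theory Defs
  imports Complex_Main "HOL-Computational_Algebra.Polynomial"
begin

text \<open>Abstract model of the complex p-adic numbers: a field carrying an absolute value
  N (playing the role of the p-adic norm) which is non-archimedean, normalised by
  N p = 1/p, complete, and whose field is algebraically closed.\<close>

definition Cp_like :: "nat \<Rightarrow> ('a::field \<Rightarrow> real) \<Rightarrow> bool" where
  "Cp_like p N \<longleftrightarrow>
     (\<forall>x. N x \<ge> 0) \<and> (\<forall>x. N x = 0 \<longleftrightarrow> x = 0) \<and>
     (\<forall>x y. N (x * y) = N x * N y) \<and>
     (\<forall>x y. N (x + y) \<le> max (N x) (N y)) \<and>
     N (of_nat p) = 1 / real p \<and>
     (\<forall>X::nat \<Rightarrow> 'a. (\<forall>e>0. \<exists>M. \<forall>m\<ge>M. \<forall>n\<ge>M. N (X m - X n) < e)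
          \<longrightarrow> (\<exists>l. (\<lambda>n. N (X n - l)) \<longlonglongrightarrow> 0)) \<and>
     (\<forall>q::'a poly. degree q \<ge> 1 \<longrightarrow> (\<exists>x. poly q x = 0))"

definition nball :: "('a::field \<Rightarrow> real) \<Rightarrow> 'a \<Rightarrow> real \<Rightarrow> 'a set" where
  "nball N c r = {x. N (x - c) < r}"

definition nsphere :: "('a::field \<Rightarrow> real) \<Rightarrow> 'a \<Rightarrow> real \<Rightarrow> 'a set" where
  "nsphere N c r = {x. N (x - c) = r}"

definition nderiv :: "('a::field \<Rightarrow> real) \<Rightarrow> 'a set \<Rightarrow> ('a \<Rightarrow> 'a) \<Rightarrow> 'a \<Rightarrow> 'a \<Rightarrow> bool" where
  "nderiv N D f x0 L \<longleftrightarrow>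
     (\<forall>e>0. \<exists>d>0. \<forall>x\<in>D. 0 < N (x - x0) \<and> N (x - x0) < d \<longrightarrow>
        N ((f x - f x0) / (x - x0) - L) < e)"

definition attracting_fp :: "('a::field \<Rightarrow> real) \<Rightarrow> 'a set \<Rightarrow> ('a \<Rightarrow> 'a) \<Rightarrow> 'a \<Rightarrow> bool" where
  "attracting_fp N D f x0 \<longleftrightarrow> x0 \<in> D \<and> f x0 = x0 \<and> (\<exists>L. nderiv N D f x0 L \<and> N L < 1)"

definition indifferent_fp :: "('a::field \<Rightarrow> real) \<Rightarrow> 'a set \<Rightarrow> ('a \<Rightarrow> 'a) \<Rightarrow> 'a \<Rightarrow> bool" where
  "indifferent_fp N D f x0 \<longleftrightarrow> x0 \<in> D \<and> f x0 = x0 \<and> (\<exists>L. nderiv N D f x0 L \<and> N L = 1)"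

text \<open>Orbit defined for all n: no iterate leaves D (i.e. hits the pole).\<close>
definition basin :: "('a::field \<Rightarrow> real) \<Rightarrow> 'a set \<Rightarrow> ('a \<Rightarrow> 'a) \<Rightarrow> 'a \<Rightarrow> 'a set" where
  "basin N D f x0 = {y. (\<forall>n. (f ^^ n) y \<in> D) \<and> (\<lambda>n. N ((f ^^ n) y - x0)) \<longlonglongrightarrow> 0}"

definition siegel_disk :: "('a::field \<Rightarrow> real) \<Rightarrow> 'a set \<Rightarrow> ('a \<Rightarrow> 'a) \<Rightarrow> 'a \<Rightarrow> real \<Rightarrow> bool" where
  "siegel_disk N D f x0 r \<longleftrightarrow> r > 0 \<and> nball N x0 r \<subseteq> D \<and>
     (\<forall>\<rho>. \<rho> < r \<longrightarrow> (\<forall>x \<in> nsphere N x0 \<rho>. \<forall>n\<ge>1. (f ^^ n) x \<in> nsphere N x0 \<rho>))"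

definition max_siegel :: "('a::field \<Rightarrow> real) \<Rightarrow> 'a set \<Rightarrow> ('a \<Rightarrow> 'a) \<Rightarrow> 'a \<Rightarrow> 'a set" where
  "max_siegel N D f x0 = \<Union>{nball N x0 r | r. siegel_disk N D f x0 r}"

end

theory Submission
  imports Defs
begin

context
  fixes N :: "'a::field \<Rightarrow> real" and p :: nat
  assumes cp: "Cp_like p N"
begin

lemma N_nonneg: "N x \<ge> 0" using cp unfolding Cp_like_def by auto
lemma N_zero: "N x = 0 \<longleftrightarrow> x = 0" using cp unfolding Cp_like_def by auto
lemma N_mult: "N (x*y) = N x * N y" using cp unfolding Cp_like_def by auto
lemma N_ultra: "N (x+y) \<le> max (N x) (N y)" using cp unfolding Cp_like_def by auto
lemma N_p: "N (of_nat p) = 1 / real p" using cp unfolding Cp_like_def by auto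

lemma N_pos: "x \<noteq> 0 \<Longrightarrow> N x > 0" using N_nonneg[of x] N_zero[of x] by linarith

lemma N_one: "N 1 = 1"
proof -
  have "N 1 = N 1 * N 1" using N_mult[of 1 1] by simp
  moreover have "N 1 > 0" using N_pos by simp
  ultimately show ?thesis by (metis mult_cancel_right1 less_irrefl)
qed

lemma N_minus1: "N (-1) = 1"
proof -
  have "N (-1) * N (-1) = 1" using N_mult[of "-1" "-1"] N_one by simp
  then have "(N (-1) - 1) * (N (-1) + 1) = 0" by (simp add: algebra_simps)
  moreover have "N (-1) + 1 > 0" using N_nonneg[of "-1"] by simp
  ultimately show ?thesis by simp
qed

lemma N_uminus: "N (- x) = N x"
  using N_mult[of "-1" x] N_minus1 by simp

lemma N_sub_comm: "N (x - y) = N (y - x)"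
  using N_uminus[of "x - y"] by simp

lemma N_div: "N (x / y) = N x / N y"
proof (cases "y = 0")
  case True then show ?thesis using N_zero[of 0] by simp
next
  case False
  have "N (x / y) * N y = N x" using N_mult[of "x/y" y] False by simp
  then show ?thesis using N_pos[OF False] by (simp add: field_simps)
qed

lemma N_ultra_sub: "N (x-y) \<le> max (N x) (N y)"
  using N_ultra[of x "-y"] N_uminus[of y] by simp

lemma N_strict: assumes "N y < N x" shows "N (x+y) = N x"
proof -
  have 1: "N (x+y) \<le> N x" using N_ultra[of x y] assms by simp
  have "N x \<le> max (N (x+y)) (N y)" using N_ultra_sub[of "x+y" y] by simp
  then have "N x \<le> N (x+y)" using assms by (simp add: max_def split: if_splits)
  with 1 show ?thesis by simp
qed

lemma N_nat_le: "N (of_nat n) \<le> 1"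
proof (induction n)
  case 0 then show ?case using N_zero[of 0] by simp
next
  case (Suc n)
  have "N (of_nat (Suc n)) = N (of_nat n + 1)" by (simp add: add.commute)
  also have "\<dots> \<le> max (N (of_nat n)) (N 1)" by (rule N_ultra)
  also have "\<dots> \<le> 1" using Suc N_one by simp
  finally show ?case .
qed

lemma N_two: assumes "prime p" "p > 2" shows "N (2::'a) = 1"
proof -
  have "odd p" using assms by (metis prime_odd_nat)
  then obtain k where k: "p = 2*k+1" by (metis oddE)
  have "(1::'a) = of_nat p - 2 * of_nat k" using k by simp
  then have "N 1 \<le> max (N (of_nat p)) (N (2 * of_nat k))"
    by (metis N_ultra_sub)
  also have "N (2 * of_nat k) \<le> N 2" using N_mult[of 2 "of_nat k"] N_nat_le[of k] N_nonneg[of 2]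
    by (simp add: mult_left_le)
  finally have "1 \<le> max (1 / real p) (N 2)" using N_one N_p
    by (metis (no_types, opaque_lifting) max.mono order_refl order_trans)
  moreover have "1 / real p < 1" using assms by simp
  ultimately have "N 2 \<ge> 1" by linarith
  moreover have "N (2::'a) \<le> 1" using N_nat_le[of 2] by simp
  ultimately show ?thesis by simp
qed

lemma N_pow2: "N (x^2) = N x ^ 2" using N_mult[of x x] by (simp add: power2_eq_square)

lemma f_diff:
  fixes a b x y :: "'a::field"
  assumes u: "b*x+1 \<noteq> 0" and v: "b*y+1 \<noteq> 0"
  shows "a*x^2/(b*x+1) - a*y^2/(b*y+1) =
    (x-y) * (a*y*(b*y+2)/(b*y+1)^2 + a*(x-y)/((b*x+1)*(b*y+1)^2))"
proof -
  define U where "U = b*x+1"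
  define V where "V = b*y+1"
  have U: "U \<noteq> 0" and V: "V \<noteq> 0" using u v by (auto simp: U_def V_def)
  have 1: "(a*x^2/U - a*y^2/V) * (U*V^2) = a*x^2*V^2 - a*y^2*U*V"
    using U V by (simp add: field_simps power2_eq_square)
  have 2: "((x-y) * (a*y*(b*y+2)/V^2 + a*(x-y)/(U*V^2))) * (U*V^2) = (x-y)*(a*y*(b*y+2)*U + a*(x-y))"
    using U V by (simp add: field_simps power2_eq_square)
  have 3: "a*x^2*V^2 - a*y^2*U*V = (x-y)*(a*y*(b*y+2)*U + a*(x-y))"
    unfolding U_def V_def by algebra
  have "U*V^2 \<noteq> 0" using U V by simp
  then have "a*x^2/U - a*y^2/V = (x-y) * (a*y*(b*y+2)/V^2 + a*(x-y)/(U*V^2))"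
    using 1 2 3 by (metis mult_right_cancel)
  then show ?thesis unfolding U_def V_def .
qed

lemma nderiv_f:
  fixes a b y :: 'a
  assumes "a \<noteq> 0" "b \<noteq> 0" "b*y+1 \<noteq> 0"
  shows "nderiv N (UNIV - {-1/b}) (\<lambda>x. a*x^2/(b*x+1)) y (a*y*(b*y+2)/(b*y+1)^2)"
  unfolding nderiv_def
proof (intro allI impI)
  fix e :: real assume e: "e > 0"
  define c where "c = N (b*y+1)"
  have c: "c > 0" using N_pos assms c_def by auto
  have Na: "N a > 0" "N b > 0" using N_pos assms by auto
  define d where "d = min (c / N b) (e*c^3/N a)"
  have "d > 0" using c Na e by (simp add: d_def)
  moreover have "N ((a*x^2/(b*x+1) - a*y^2/(b*y+1)) / (x - y) - a*y*(b*y+2)/(b*y+1)^2) < e"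
    if x: "x \<in> UNIV - {-1/b}" "0 < N (x - y)" "N (x - y) < d" for x
  proof -
    have bx: "b*x+1 \<noteq> 0"
    proof
      assume "b*x+1 = 0"
      then have "x = -1/b" using assms(2) by (simp add: field_simps add_eq_0_iff)
      then show False using x(1) by simp
    qed
    have xy: "x - y \<noteq> 0" using x(2) N_zero[of 0] by auto
    have eq: "(a*x^2/(b*x+1) - a*y^2/(b*y+1)) / (x - y) - a*y*(b*y+2)/(b*y+1)^2
       = a*(x-y)/((b*x+1)*(b*y+1)^2)" using f_diff[OF bx assms(3), of a] xy by simp
    have "N (b*(x-y)) < c" using x(3) Na N_mult[of b "x-y"] unfolding d_def
      by (simp add: field_simps)
    then have "N ((b*y+1) + b*(x-y)) = c" using N_strict c_def by simp
    then have Nbx: "N (b*x+1) = c" by (simp add: algebra_simps)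
    have "N (a*(x-y)/((b*x+1)*(b*y+1)^2)) = N a * N (x-y) / c^3"
      using N_div N_mult N_pow2 Nbx c_def by (simp add: power3_eq_cube power2_eq_square)
    also have "\<dots> < N a * (e*c^3/N a) / c^3"
      using x(3) Na c unfolding d_def by (intro divide_strict_right_mono mult_strict_left_mono) auto
    also have "\<dots> = e" using Na c by simp
    finally show ?thesis using eq by simp
  qed
  ultimately show "\<exists>d>0. \<forall>x\<in>UNIV - {- 1 / b}. 0 < N (x - y) \<and> N (x - y) < d \<longrightarrow>
           N ((a * x\<^sup>2 / (b * x + 1) - a * y\<^sup>2 / (b * y + 1)) / (x - y) -
              a * y * (b * y + 2) / (b * y + 1)\<^sup>2) < e" by blast
qed

end

theorem theorem3p7:
  fixes N :: "'a::field \<Rightarrow> real" and p :: nat and a b :: 'a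
  assumes "prime p" and "p > 2" and "Cp_like p N"
    and "a \<noteq> 0" and "b \<noteq> 0" and "a \<noteq> b"
    and "N (2 * a) = N b" and "N (2 * a - b) = N a"
  defines "D \<equiv> UNIV - {- 1 / b}"
    and "f \<equiv> (\<lambda>x. a * x\<^sup>2 / (b * x + 1))"
    and "x1 \<equiv> 0"
    and "x2 \<equiv> 1 / (a - b)"
  shows "attracting_fp N D f x1 \<and> indifferent_fp N D f x2 \<and>
         basin N D f x1 = nball N x1 (1 / N a) \<and>
         max_siegel N D f x2 = nball N x2 (1 / N (a - b))"
proof -
  note cp = assms(3)
  have N2: "N (2::'a) = 1" using N_two[OF cp assms(1,2)] .
  have Nb: "N b = N a" using assms(7) N_mult[OF cp, of 2 a] N2 by simp
  define \<alpha> where "\<alpha> = N a"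
  define \<beta> where "\<beta> = N (a - b)"
  have ab: "a - b \<noteq> 0" using assms(6) by simp
  have al: "\<alpha> > 0" using N_pos[OF cp assms(4)] \<alpha>_def by simp
  have be: "\<beta> > 0" using N_pos[OF cp ab] \<beta>_def by simp
  have bele: "\<beta> \<le> \<alpha>" using N_ultra_sub[OF cp, of a b] Nb \<alpha>_def \<beta>_def by simp
  have Nbx: "N (b * z) = \<alpha> * N z" for z using N_mult[OF cp, of b z] Nb \<alpha>_def by simp
  have inD: "z \<in> D \<longleftrightarrow> b*z+1 \<noteq> 0" for z
  proof
    assume "z \<in> D"
    then have "z \<noteq> -1/b" unfolding D_def by simp
    then show "b*z+1 \<noteq> 0" using assms(5) by (auto simp: field_simps add_eq_0_iff)
  next
    assume "b*z+1 \<noteq> 0"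
    then show "z \<in> D" unfolding D_def using assms(5) by auto
  qed
  have Nf: "N (f z) = \<alpha> * N z ^ 2 / N (b*z+1)" for z
    unfolding f_def using N_div[OF cp] N_mult[OF cp] N_pow2[OF cp] \<alpha>_def by simp
  have v: "b * x2 + 1 = a / (a - b)" unfolding x2_def using ab by (simp add: field_simps)
  have Nv: "N (b * x2 + 1) = \<alpha> / \<beta>" unfolding v using N_div[OF cp] \<alpha>_def \<beta>_def by simp
  have v0: "b * x2 + 1 \<noteq> 0" unfolding v using ab assms(4) by simp
  have "f x2 = a*x2^2 / (a/(a-b))" by (simp add: f_def v)
  also have "\<dots> = x2^2*(a-b)" using assms(4) ab by (simp add: field_simps)
  also have "\<dots> = x2" unfolding x2_def using ab by (simp add: power2_eq_square)
  finally have fx2: "f x2 = x2" .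
  define L where "L = a*x2*(b*x2+2)/(b*x2+1)^2"
  have w: "b * x2 + 2 = (2*a - b) / (a - b)" unfolding x2_def using ab by (simp add: field_simps)
  have L: "L = (2*a - b) / a" unfolding L_def v w unfolding x2_def using ab assms(4)
    by (simp add: power2_eq_square)
  have NL: "N L = 1" unfolding L using N_div[OF cp] assms(8) al \<alpha>_def by simp
  have A1: "attracting_fp N D f x1"
  proof -
    have "nderiv N D f 0 (a*0*(b*0+2)/(b*0+1)^2)"
      using nderiv_f[OF cp assms(4,5), of 0] unfolding D_def f_def by simp
    then have "nderiv N D f 0 0" by simp
    moreover have "N 0 < 1" using N_zero[OF cp, of 0] by simp
    moreover have "0 \<in> D" using inD by simp
    ultimately show ?thesis unfolding attracting_fp_def x1_def f_def by auto
  qed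
  have A2: "indifferent_fp N D f x2"
  proof -
    have "nderiv N D f x2 L"
      using nderiv_f[OF cp assms(4,5) v0] unfolding D_def f_def L_def by simp
    then show ?thesis unfolding indifferent_fp_def using fx2 NL inD v0 by auto
  qed
  have small: "N z < 1/\<alpha> \<Longrightarrow> N (b*z+1) = 1" for z
  proof -
    assume "N z < 1/\<alpha>"
    then have "\<alpha> * N z < 1" using al by (simp add: field_simps)
    then have "N (b*z) < N 1" using Nbx[of z] N_one[OF cp] by simp
    then have "N (1 + b*z) = N 1" using N_strict[OF cp] by blast
    then show ?thesis using N_one[OF cp] by (simp add: add.commute)
  qed
  have B1: "basin N D f x1 \<subseteq> nball N x1 (1 / N a)"
  proof
    fix y assume y: "y \<in> basin N D f x1"
    then have yD: "\<forall>n. (f ^^ n) y \<in> D" and lim: "(\<lambda>n. N ((f ^^ n) y)) \<longlonglongrightarrow> 0"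
      unfolding basin_def x1_def by auto
    show "y \<in> nball N x1 (1 / N a)"
    proof (rule ccontr)
      assume "y \<notin> nball N x1 (1 / N a)"
      then have y1: "N y \<ge> 1/\<alpha>" unfolding nball_def x1_def \<alpha>_def by simp
      have ge: "N ((f ^^ n) y) \<ge> 1/\<alpha>" for n
      proof (induction n)
        case 0 then show ?case using y1 by simp
      next
        case (Suc n)
        define z where "z = (f ^^ n) y"
        have z: "N z \<ge> 1/\<alpha>" using Suc z_def by simp
        have zD: "b*z+1 \<noteq> 0" using yD inD z_def by blast
        have pos: "N (b*z+1) > 0" using N_pos[OF cp zD] .
        have zpos: "N z > 0" using z al by (smt (verit) divide_pos_pos)
        have "\<alpha> * N z \<ge> 1" using z al by (simp add: field_simps)
        then have le: "N (b*z+1) \<le> \<alpha> * N z" using N_ultra[OF cp, of "b*z" 1] Nbx N_one[OF cp] by simp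
        have "N (f z) = \<alpha> * N z ^ 2 / N (b*z+1)" by (rule Nf)
        also have "\<dots> \<ge> \<alpha> * N z ^ 2 / (\<alpha> * N z)"
          using le pos al zpos by (intro divide_left_mono) auto
        finally have "N (f z) \<ge> N z" using al zpos by (simp add: power2_eq_square)
        then show ?case using z z_def by simp
      qed
      have "1/\<alpha> \<le> 0" using lim ge by (intro LIMSEQ_le_const[OF lim]) auto
      then show False using al by simp
    qed
  qed
  have B2: "nball N x1 (1 / N a) \<subseteq> basin N D f x1"
  proof
    fix y assume "y \<in> nball N x1 (1 / N a)"
    then have y: "N y < 1/\<alpha>" unfolding nball_def x1_def \<alpha>_def by simp
    define t where "t = \<alpha> * N y"
    have t: "0 \<le> t" "t < 1" using y al N_nonneg[OF cp, of y] unfolding t_def by (auto simp: field_simps)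
    have bd: "N ((f ^^ n) y) \<le> N y * t ^ n" for n
    proof (induction n)
      case 0 then show ?case by simp
    next
      case (Suc n)
      define z where "z = (f ^^ n) y"
      have z: "N z \<le> N y * t^n" using Suc z_def by simp
      have "N y * t^n \<le> N y" using t N_nonneg[OF cp, of y] by (simp add: mult_left_le power_le_one)
      then have zy: "N z \<le> N y" using z by simp
      then have "N z < 1/\<alpha>" using y by simp
      then have "N (b*z+1) = 1" by (rule small)
      then have "N (f z) = (\<alpha> * N z) * N z" using Nf by (simp add: power2_eq_square)
      also have "\<dots> \<le> t * (N y * t^n)"
        using zy z al N_nonneg[OF cp, of z] t unfolding t_def
        by (intro mult_mono) auto
      finally show ?case using z_def by (simp add: algebra_simps)
    qed
    have "N y * t^n \<le> N y" for n using t N_nonneg[OF cp, of y] by (simp add: mult_left_le power_le_one)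
    then have inD': "(f ^^ n) y \<in> D" for n
    proof -
      have "N ((f ^^ n) y) < 1/\<alpha>" using bd[of n] y \<open>\<And>n. N y * t^n \<le> N y\<close>[of n] by linarith
      then have "N (b * (f ^^ n) y + 1) = 1" by (rule small)
      then have "b * (f ^^ n) y + 1 \<noteq> 0" by (metis one_neq_zero N_zero[OF cp])
      then show ?thesis using inD by blast
    qed
    have h0: "(\<lambda>n. N y * t ^ n) \<longlonglongrightarrow> 0"
      using t by (intro tendsto_mult_right_zero LIMSEQ_power_zero) auto
    have e1: "eventually (\<lambda>n. (0::real) \<le> N ((f ^^ n) y)) sequentially"
      using N_nonneg[OF cp] by simp
    have e2: "eventually (\<lambda>n. N ((f ^^ n) y) \<le> N y * t ^ n) sequentially"
      using bd by simp
    have "(\<lambda>n. N ((f ^^ n) y)) \<longlonglongrightarrow> 0"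
      by (rule tendsto_sandwich[OF e1 e2 tendsto_const h0])
    then show "y \<in> basin N D f x1" unfolding basin_def x1_def using inD' by simp
  qed
  have step: "b*z+1 \<noteq> 0 \<and> N (f z - x2) = N (z - x2)" if z: "N (z - x2) < 1/\<beta>" for z
  proof -
    have "\<alpha> * N (z-x2) < \<alpha> * (1/\<beta>)" using z al by (rule mult_strict_left_mono)
    then have "N (b*(z-x2)) < \<alpha>/\<beta>" using Nbx[of "z-x2"] by simp
    then have "N ((b*x2+1) + b*(z-x2)) = \<alpha>/\<beta>" using N_strict[OF cp] Nv by simp
    then have Nz: "N (b*z+1) = \<alpha>/\<beta>" by (simp add: algebra_simps)
    then have z0: "b*z+1 \<noteq> 0" using al be N_zero[OF cp, of 0] by auto
    define E where "E = a*(z-x2)/((b*z+1)*(b*x2+1)^2)"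
    have eq: "f z - x2 = (z - x2) * (L + E)"
      using f_diff[OF cp z0 v0, of a] fx2 unfolding f_def L_def E_def by simp
    have q: "\<alpha>/\<beta> \<ge> 1" using bele be by simp
    have "N E = \<alpha> * N (z-x2) / (\<alpha>/\<beta>)^3"
      unfolding E_def using N_div[OF cp] N_mult[OF cp] N_pow2[OF cp] Nz Nv \<alpha>_def
      by (simp add: power3_eq_cube power2_eq_square)
    also have "\<dots> < 1"
    proof -
      have "\<alpha> * N (z-x2) < \<alpha> * (1/\<beta>)" using z al by (rule mult_strict_left_mono)
      then have "\<alpha> * N (z-x2) < \<alpha>/\<beta>" by simp
      also have "\<alpha>/\<beta> \<le> (\<alpha>/\<beta>)^3" using q
        by (metis power_increasing le_numeral_extra(4) one_le_numeral power_one_right)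
      finally show ?thesis using q by simp
    qed
    finally have "N (L + E) = 1" using N_strict[OF cp, of E L] NL by simp
    then have "N (f z - x2) = N (z - x2)" unfolding eq using N_mult[OF cp] by simp
    then show ?thesis using z0 by simp
  qed
  have iter: "N ((f ^^ n) x - x2) = N (x - x2)" if x: "N (x - x2) < 1/\<beta>" for x n
  proof (induction n)
    case 0 then show ?case by simp
  next
    case (Suc n) then show ?case using step[of "(f ^^ n) x"] x by simp
  qed
  have SD: "siegel_disk N D f x2 (1/\<beta>)"
    unfolding siegel_disk_def
  proof (intro conjI allI impI ballI)
    show "1/\<beta> > 0" using be by simp
    show "nball N x2 (1/\<beta>) \<subseteq> D" using step inD unfolding nball_def by auto
  next
    fix \<rho> x n assume "\<rho> < 1/\<beta>" "x \<in> nsphere N x2 \<rho>" "1 \<le> (n::nat)"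
    then show "(f ^^ n) x \<in> nsphere N x2 \<rho>" using iter unfolding nsphere_def by auto
  qed
  have P: "-1/b - x2 = - a / (b * (a - b))" unfolding x2_def using ab assms(5)
    by (simp add: field_simps)
  have NP: "N (-1/b - x2) = 1/\<beta>" unfolding P using N_div[OF cp] N_uminus[OF cp] N_mult[OF cp] Nb
      \<alpha>_def \<beta>_def al by simp
  have S: "max_siegel N D f x2 = nball N x2 (1 / N (a - b))"
  proof
    show "nball N x2 (1 / N (a - b)) \<subseteq> max_siegel N D f x2"
      unfolding max_siegel_def using SD \<beta>_def by blast
  next
    show "max_siegel N D f x2 \<subseteq> nball N x2 (1 / N (a - b))"
    proof
      fix x assume "x \<in> max_siegel N D f x2"
      then obtain r where r: "siegel_disk N D f x2 r" "x \<in> nball N x2 r"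
        unfolding max_siegel_def by auto
      have "r \<le> 1/\<beta>"
      proof (rule ccontr)
        assume "\<not> r \<le> 1/\<beta>"
        then have "-1/b \<in> nball N x2 r" unfolding nball_def using NP by simp
        then have "-1/b \<in> D" using r(1) unfolding siegel_disk_def by auto
        then show False unfolding D_def by simp
      qed
      then show "x \<in> nball N x2 (1 / N (a - b))" using r(2) \<beta>_def unfolding nball_def by simp
    qed
  qed
  show ?thesis using A1 A2 B1 B2 S by blast
qed

end
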